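(* Let $\gamma\geq0$ and $G=(V,E,\omega)\in\mathcal C_\gamma$, and assume $r=0$. Define, for $i,j\in V$, $\tilde\omega_{ij}:=-d_j^r\sum_{m=1}^{n-1}\Lambda_m\phi^m_i\phi^m_j$ if $i\neq j$ and $\tilde\omega_{ii}:=0$. Let $\tilde E\subset V^2$ contain the undirected edge $(i,j)$ if and only if $\tilde\omega_{ij}>0$. Then $\tilde G=(V,\tilde E,\tilde\omega)\in\mathcal G$. Moreover, if $\tilde\Delta$ denotes the graph Laplacian on $\tilde G$ with parameter $\tilde r=0$, i.e. $(\tilde\Delta u)_i=\sum_{j}\tilde\omega_{ij}(u_i-u_j)$, then $\tilde\Delta=L$.
   Context: $\mathcal{G}$ is the set of finite, simple, connected, undirected, edge-weighted graphs $G=(V,E,\omega)$ with $V=\{1,\dots,n\}$, $n\geq2$, weights $\omega_{ij}=\omega_{ji}>0$ for $(i,j)\in E$ and $\omega_{ij}=0$ otherwise. $d_i=\sum_j\omega_{ij}$. $\mathcal V$: functions $V\to\mathbb R$. With parameter $r\in[0,1]$: $\langle u,v\rangle_{\mathcal V}=\sum_id_i^ru_iv_i$, $(\Delta u)_i=d_i^{-r}\sum_j\omega_{ij}(u_i-u_j)$, $\mathcal M(u)=\sum_id_i^ru_i$, $\mathrm{vol}(V)=\sum_id_i^r$, $\mathcal A(u)=\frac{\mathcal M(u)}{\mathrm{vol}(V)}\chi_V$ ($\chi_S$ is the indicator of $S$). For $u\in\mathcal V$, let $\varphi$ be the unique solution of $\Delta\varphi=u-\mathcal A(u)$, $\mathcal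 M(\varphi)=0$, and $Lu:=\Delta u+\gamma\varphi$. Let $0=\lambda_0<\lambda_1\leq\dots\leq\lambda_{n-1}$ be the eigenvalues of $\Delta$ with $\langle\cdot,\cdot\rangle_{\mathcal V}$-orthonormal eigenfunctions $\phi^0=\mathrm{vol}(V)^{-1/2}\chi_V,\phi^1,\dots,\phi^{n-1}$, and $\Lambda_0=0$, $\Lambda_m=\lambda_m+\gamma/\lambda_m$ ($m\geq1$). Equilibrium measure: for a proper subset $S\subsetneq V$, $\nu^S$ is the unique $\nu\in\mathcal V$ with $(\Delta\nu)_i=1$ for $i\in S$ and $\nu_i=0$ for $i\notin S$. For $j\in V$, $f^j:=\nu^{V\setminus\{j\}}-\mathcal A(\nu^{V\setminus\{j\}})$. Classes: $\mathcal C^0=\{G\in\mathcal G:\forall j\in V\ \forall i\in V\setminus\{j\}:\ \omega_{ij}>0\text{ or }f^j_i\geq0\}$; for $\gamma>0$, $\mathcal C_\gamma=\{G\in\mathcal C^0:\forall j\ \forall i\neq j:\ \omega_{ij}=0\text{ or }d_i^{-r}\omega_{ij}+\gamma\frac{d_j^r}{\mathrm{vol}(V)}f^j_i>0\}$; and $\mathcal C_0:=\mathcal G$. *)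

theory Defs
  imports Complex_Main
begin

text \<open>A weighted graph on V = {1..n} is encoded by its weight function
  w :: nat => nat => real (w i j = 0 means no edge; values outside V are 0).\<close>

definition verts :: "nat \<Rightarrow> nat set" where
  "verts n = {1..n}"

definition is_wgraph :: "(nat \<Rightarrow> nat \<Rightarrow> real) \<Rightarrow> nat \<Rightarrow> bool" where
  "is_wgraph w n \<longleftrightarrow> n \<ge> 2
     \<and> (\<forall>i j. w i j = w j i)
     \<and> (\<forall>i j. w i j \<ge> 0)
     \<and> (\<forall>i. w i i = 0)
     \<and> (\<forall>i j. (i \<notin> verts n \<or> j \<notin> verts n) \<longrightarrow> w i j = 0)
     \<and> (\<forall>i\<in>verts n. \<forall>j\<in>verts n.
          (i, j) \<in> {(a, b). a \<in> verts n \<and> b \<in> verts n \<and> w a b > 0}\<^sup>*)"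

definition deg :: "(nat \<Rightarrow> nat \<Rightarrow> real) \<Rightarrow> nat \<Rightarrow> nat \<Rightarrow> real" where
  "deg w n i = (\<Sum>j\<in>verts n. w i j)"

definition ip :: "real \<Rightarrow> (nat \<Rightarrow> nat \<Rightarrow> real) \<Rightarrow> nat \<Rightarrow> (nat \<Rightarrow> real) \<Rightarrow> (nat \<Rightarrow> real) \<Rightarrow> real" where
  "ip r w n u v = (\<Sum>i\<in>verts n. deg w n i powr r * u i * v i)"

definition lap :: "real \<Rightarrow> (nat \<Rightarrow> nat \<Rightarrow> real) \<Rightarrow> nat \<Rightarrow> (nat \<Rightarrow> real) \<Rightarrow> nat \<Rightarrow> real" where
  "lap r w n u i = deg w n i powr (-r) * (\<Sum>j\<in>verts n. w i j * (u i - u j))"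

definition mass :: "real \<Rightarrow> (nat \<Rightarrow> nat \<Rightarrow> real) \<Rightarrow> nat \<Rightarrow> (nat \<Rightarrow> real) \<Rightarrow> real" where
  "mass r w n u = (\<Sum>i\<in>verts n. deg w n i powr r * u i)"

definition vol :: "real \<Rightarrow> (nat \<Rightarrow> nat \<Rightarrow> real) \<Rightarrow> nat \<Rightarrow> real" where
  "vol r w n = (\<Sum>i\<in>verts n. deg w n i powr r)"

definition avg :: "real \<Rightarrow> (nat \<Rightarrow> nat \<Rightarrow> real) \<Rightarrow> nat \<Rightarrow> (nat \<Rightarrow> real) \<Rightarrow> nat \<Rightarrow> real" where
  "avg r w n u i = (if i \<in> verts n then mass r w n u / vol r w n else 0)"

definition potential :: "real \<Rightarrow> (nat \<Rightarrow> nat \<Rightarrow> real) \<Rightarrow> nat \<Rightarrow> (nat \<Rightarrow> real) \<Rightarrow> nat \<Rightarrow> real" where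
  "potential r w n u = (THE p. (\<forall>i\<in>verts n. lap r w n p i = u i - avg r w n u i)
       \<and> mass r w n p = 0 \<and> (\<forall>i. i \<notin> verts n \<longrightarrow> p i = 0))"

definition Lop :: "real \<Rightarrow> (nat \<Rightarrow> nat \<Rightarrow> real) \<Rightarrow> nat \<Rightarrow> real \<Rightarrow> (nat \<Rightarrow> real) \<Rightarrow> nat \<Rightarrow> real" where
  "Lop r w n \<gamma> u i = lap r w n u i + \<gamma> * potential r w n u i"

definition eqmeas :: "real \<Rightarrow> (nat \<Rightarrow> nat \<Rightarrow> real) \<Rightarrow> nat \<Rightarrow> nat set \<Rightarrow> nat \<Rightarrow> real" where
  "eqmeas r w n S = (THE \<nu>. (\<forall>i\<in>S. lap r w n \<nu> i = 1)
       \<and> (\<forall>i\<in>verts n - S. \<nu> i = 0) \<and> (\<forall>i. i \<notin> verts n \<longrightarrow> \<nu> i = 0))"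

definition fj :: "real \<Rightarrow> (nat \<Rightarrow> nat \<Rightarrow> real) \<Rightarrow> nat \<Rightarrow> nat \<Rightarrow> nat \<Rightarrow> real" where
  "fj r w n j i = eqmeas r w n (verts n - {j}) i
       - avg r w n (eqmeas r w n (verts n - {j})) i"

definition classC0 :: "real \<Rightarrow> (nat \<Rightarrow> nat \<Rightarrow> real) \<Rightarrow> nat \<Rightarrow> bool" where
  "classC0 r w n \<longleftrightarrow> is_wgraph w n \<and>
     (\<forall>j\<in>verts n. \<forall>i\<in>verts n - {j}. w i j > 0 \<or> fj r w n j i \<ge> 0)"

definition classC :: "real \<Rightarrow> real \<Rightarrow> (nat \<Rightarrow> nat \<Rightarrow> real) \<Rightarrow> nat \<Rightarrow> bool" where
  "classC r \<gamma> w n \<longleftrightarrow>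
     (if \<gamma> = 0 then is_wgraph w n
      else classC0 r w n \<and>
        (\<forall>j\<in>verts n. \<forall>i\<in>verts n - {j}. w i j = 0 \<or>
           deg w n i powr (-r) * w i j
             + \<gamma> * (deg w n j powr r / vol r w n) * fj r w n j i > 0))"

end

theory Submission
  imports Defs "Jordan_Normal_Form.Determinant"
begin

lemma reidx: "(\<Sum>i\<in>{1..n}. g i) = (\<Sum>a<n. g (Suc a)::real)"
  by (induct n) auto

lemma complete_orth:
  fixes f :: "nat \<Rightarrow> nat \<Rightarrow> real"
  assumes o: "\<forall>m<n. \<forall>k<n. (\<Sum>i\<in>{1..n}. f m i * f k i) = (if m=k then 1 else 0)"
    and i: "i\<in>{1..n}" and j: "j\<in>{1..n}"
  shows "(\<Sum>m<n. f m i * f m j) = (if i=j then 1 else 0)"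
proof -
  define A where "A = mat n n (\<lambda>(a,m). f m (Suc a))"
  have Ac: "A \<in> carrier_mat n n" "transpose_mat A \<in> carrier_mat n n" by (auto simp: A_def)
  have "transpose_mat A * A = 1\<^sub>m n"
  proof (rule eq_matI)
    fix m k assume mk: "m < dim_row (1\<^sub>m n :: real mat)" "k < dim_col (1\<^sub>m n :: real mat)"
    then have "(transpose_mat A * A) $$ (m,k) = (\<Sum>a<n. f m (Suc a) * f k (Suc a))"
      by (auto simp: A_def scalar_prod_def lessThan_atLeast0)
    also have "\<dots> = (\<Sum>i\<in>{1..n}. f m i * f k i)" by (rule reidx[symmetric])
    also have "\<dots> = (if m=k then 1 else 0)" using o mk by simp
    finally show "(transpose_mat A * A) $$ (m,k) = 1\<^sub>m n $$ (m,k)" using mk by simp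
  qed (auto simp: A_def)
  then have AB: "A * transpose_mat A = 1\<^sub>m n" using mat_mult_left_right_inverse Ac by blast
  obtain a b where ab: "i = Suc a" "j = Suc b" "a < n" "b < n" using i j
    by (metis Suc_le_eq atLeastAtMost_iff not0_implies_Suc not_one_le_zero)
  have "(A * transpose_mat A) $$ (a,b) = (\<Sum>m<n. f m i * f m j)"
    using ab by (auto simp: A_def scalar_prod_def lessThan_atLeast0)
  then show ?thesis using AB ab by simp
qed

locale sp =
  fixes w :: "nat \<Rightarrow> nat \<Rightarrow> real" and n :: nat and lam :: "nat \<Rightarrow> real"
    and \<phi> :: "nat \<Rightarrow> nat \<Rightarrow> real"
  assumes wg: "is_wgraph w n"
    and lam0: "lam 0 = 0"
    and lampos: "\<forall>m\<in>{1..<n}. lam m > 0"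
    and eig: "\<forall>m<n. \<forall>i\<in>verts n. lap 0 w n (\<phi> m) i = lam m * \<phi> m i"
    and orth: "\<forall>m<n. \<forall>k<n. ip 0 w n (\<phi> m) (\<phi> k) = (if m = k then 1 else 0)"
    and phi0: "\<forall>i\<in>verts n. \<phi> 0 i = vol 0 w n powr (-1/2)"
begin

abbreviation "V \<equiv> verts n"

lemma n2: "n \<ge> 2" using wg by (simp add: is_wgraph_def)
lemma finV[simp]: "finite V" by (simp add: verts_def)
lemma cardV[simp]: "card V = n" by (simp add: verts_def)
lemma wsym: "w i j = w j i" using wg by (simp add: is_wgraph_def)
lemma wnn: "w i j \<ge> 0" using wg by (simp add: is_wgraph_def)
lemma wdiag[simp]: "w i i = 0" using wg by (simp add: is_wgraph_def)

lemma degpos: assumes i: "i \<in> V" shows "deg w n i > 0"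
proof -
  define j where "j = (if i = 1 then 2 else (1::nat))"
  have j: "j \<in> V" "j \<noteq> i" using i n2 by (auto simp: j_def verts_def)
  have "(i, j) \<in> {(a, b). a \<in> V \<and> b \<in> V \<and> w a b > 0}\<^sup>*"
    using wg i j by (auto simp: is_wgraph_def)
  then obtain k where k: "k \<in> V" "w i k > 0" using j(2)
    by (cases rule: converse_rtranclE) auto
  show ?thesis unfolding deg_def
    by (rule sum_pos2[OF finV k(1)]) (use k wnn in auto)
qed

lemma d1[simp]: "i \<in> V \<Longrightarrow> deg w n i powr 0 = 1"
  using degpos[of i] by simp
lemma d0[simp]: "i \<in> V \<Longrightarrow> deg w n i \<noteq> 0"
  using degpos[of i] by simp

lemma lapE: "i \<in> V \<Longrightarrow> lap 0 w n u i = (\<Sum>j\<in>V. w i j * (u i - u j))"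
  by (simp add: lap_def cong: sum.cong)
lemma ipE: "ip 0 w n u v = (\<Sum>i\<in>V. u i * v i)"
  by (simp add: ip_def cong: sum.cong)
lemma massE: "mass 0 w n u = (\<Sum>i\<in>V. u i)"
  by (simp add: mass_def cong: sum.cong)
lemma volE: "vol 0 w n = real n"
  by (simp add: vol_def cong: sum.cong)
lemma avgE: "i \<in> V \<Longrightarrow> avg 0 w n u i = (\<Sum>j\<in>V. u j) / real n"
  by (simp add: avg_def massE volE)

lemma orth': "m < n \<Longrightarrow> k < n \<Longrightarrow> (\<Sum>i\<in>V. \<phi> m i * \<phi> k i) = (if m = k then 1 else 0)"
  using orth by (simp add: ipE)
lemma phi0': "i \<in> V \<Longrightarrow> \<phi> 0 i = real n powr (-1/2)"
  using phi0 by (simp add: volE)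
lemma eig': "m < n \<Longrightarrow> i \<in> V \<Longrightarrow> lap 0 w n (\<phi> m) i = lam m * \<phi> m i"
  using eig by simp

lemma complete: "i \<in> V \<Longrightarrow> j \<in> V \<Longrightarrow> (\<Sum>m<n. \<phi> m i * \<phi> m j) = (if i=j then 1 else 0)"
  using complete_orth[of n \<phi> i j] orth' by (simp add: verts_def)

lemma npow: "real n powr (-1/2) * real n powr (-1/2) = 1 / real n"
  using n2 by (simp add: powr_add[symmetric] powr_minus_divide)

lemma sum_phi: assumes m: "m \<in> {1..<n}" shows "(\<Sum>i\<in>V. \<phi> m i) = 0"
proof -
  have "(\<Sum>i\<in>V. \<phi> m i * \<phi> 0 i) = 0" using orth'[of m 0] m by auto
  then have "(\<Sum>i\<in>V. \<phi> m i) * real n powr (-1/2) = 0"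
    by (simp add: phi0' sum_distrib_right)
  then show ?thesis using n2 by simp
qed

lemma lap_cong: "i \<in> V \<Longrightarrow> (\<forall>j\<in>V. u j = v j) \<Longrightarrow> lap 0 w n u i = lap 0 w n v i"
  by (simp add: lapE)

lemma lap_lin: "finite M \<Longrightarrow> i \<in> V \<Longrightarrow>
   lap 0 w n (\<lambda>x. \<Sum>m\<in>M. a m * f m x) i = (\<Sum>m\<in>M. a m * lap 0 w n (f m) i)"
proof -
  assume M: "finite M" and i: "i \<in> V"
  have "lap 0 w n (\<lambda>x. \<Sum>m\<in>M. a m * f m x) i = (\<Sum>j\<in>V. \<Sum>m\<in>M. a m * (w i j * (f m i - f m j)))"
    using i by (simp add: lapE sum_subtractf[symmetric] sum_distrib_left algebra_simps)
  also have "\<dots> = (\<Sum>m\<in>M. a m * lap 0 w n (f m) i)"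
    using i by (simp add: lapE sum_distrib_left sum.swap[of _ V])
  finally show ?thesis .
qed

lemma lap_diff: "i \<in> V \<Longrightarrow> lap 0 w n (\<lambda>x. f x - g x) i = lap 0 w n f i - lap 0 w n g i"
  by (simp add: lapE sum_subtractf[symmetric] algebra_simps)

lemma lap_sum_zero: "(\<Sum>i\<in>V. lap 0 w n d i) = 0"
proof -
  have "(\<Sum>i\<in>V. lap 0 w n d i) = (\<Sum>i\<in>V. \<Sum>j\<in>V. w i j * d i) - (\<Sum>i\<in>V. \<Sum>j\<in>V. w i j * d j)"
    by (simp add: lapE sum_subtractf[symmetric] algebra_simps)
  also have "(\<Sum>i\<in>V. \<Sum>j\<in>V. w i j * d j) = (\<Sum>i\<in>V. \<Sum>j\<in>V. w i j * d i)"
    by (subst sum.swap) (simp add: wsym)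
  finally show ?thesis by simp
qed

definition coef :: "(nat \<Rightarrow> real) \<Rightarrow> nat \<Rightarrow> real" where
  "coef u m = (\<Sum>j\<in>V. \<phi> m j * u j)"

lemma expand: assumes i: "i \<in> V" shows "u i = (\<Sum>m<n. coef u m * \<phi> m i)"
proof -
  have "(\<Sum>m<n. coef u m * \<phi> m i) = (\<Sum>j\<in>V. u j * (\<Sum>m<n. \<phi> m i * \<phi> m j))"
    by (simp add: coef_def sum_distrib_left sum_distrib_right sum.swap[of _ V] algebra_simps)
  also have "\<dots> = (\<Sum>j\<in>V. u j * (if i = j then 1 else 0))"
    using i by (intro sum.cong) (auto simp: complete)
  also have "\<dots> = u i" using i by (simp add: if_distrib cong: if_cong)
  finally show ?thesis by simp
qed

lemma proj: assumes k: "k < n" shows "(\<Sum>i\<in>V. \<phi> k i * (\<Sum>m<n. a m * \<phi> m i)) = a k"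
proof -
  have "(\<Sum>i\<in>V. \<phi> k i * (\<Sum>m<n. a m * \<phi> m i)) = (\<Sum>m<n. a m * (\<Sum>i\<in>V. \<phi> k i * \<phi> m i))"
    by (simp add: sum_distrib_left sum.swap[of _ V] algebra_simps)
  also have "\<dots> = (\<Sum>m<n. a m * (if k = m then 1 else 0))"
    by (intro sum.cong) (auto simp: orth' k)
  also have "\<dots> = a k" using k by (simp add: if_distrib cong: if_cong)
  finally show ?thesis .
qed

lemma lap_expand: assumes i: "i \<in> V"
  shows "lap 0 w n u i = (\<Sum>m<n. coef u m * lam m * \<phi> m i)"
proof -
  have "lap 0 w n u i = lap 0 w n (\<lambda>x. \<Sum>m<n. coef u m * \<phi> m x) i"
    using i expand by (intro lap_cong) auto
  also have "\<dots> = (\<Sum>m<n. coef u m * lap 0 w n (\<phi> m) i)" using i by (simp add: lap_lin)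
  also have "\<dots> = (\<Sum>m<n. coef u m * lam m * \<phi> m i)" using i by (simp add: eig' mult.assoc)
  finally show ?thesis .
qed

lemma split0: "n > 0 \<Longrightarrow> (\<Sum>m<n. g m) = g 0 + (\<Sum>m\<in>{1..<n}. g m)"
proof -
  assume "n > 0"
  then have "{..<n} = insert 0 {1..<n}" by auto
  then show ?thesis by simp
qed

lemma lap_zero_const: assumes z: "\<forall>i\<in>V. lap 0 w n d i = 0" and i: "i \<in> V"
  shows "d i = coef d 0 * real n powr (-1/2)"
proof -
  have ck: "coef d k = 0" if k: "k \<in> {1..<n}" for k
  proof -
    have "0 = (\<Sum>i\<in>V. \<phi> k i * lap 0 w n d i)" using z by simp
    also have "\<dots> = (\<Sum>i\<in>V. \<phi> k i * (\<Sum>m<n. (coef d m * lam m) * \<phi> m i))"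
      by (intro sum.cong) (auto simp: lap_expand)
    also have "\<dots> = coef d k * lam k" using k by (intro proj) auto
    finally have "coef d k * lam k = 0" by simp
    moreover have "lam k > 0" using lampos k by blast
    ultimately show ?thesis by simp
  qed
  have "d i = (\<Sum>m<n. coef d m * \<phi> m i)" using i by (rule expand)
  also have "\<dots> = coef d 0 * \<phi> 0 i + (\<Sum>m\<in>{1..<n}. coef d m * \<phi> m i)"
    using n2 by (intro split0) auto
  also have "\<dots> = coef d 0 * real n powr (-1/2)" using ck i by (simp add: phi0')
  finally show ?thesis .
qed

definition pot :: "(nat \<Rightarrow> real) \<Rightarrow> nat \<Rightarrow> real" where
  "pot u x = (if x \<in> V then (\<Sum>m\<in>{1..<n}. (coef u m / lam m) * \<phi> m x) else 0)"

lemma pot_lap: assumes i: "i \<in> V" shows "lap 0 w n (pot u) i = u i - avg 0 w n u i"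
proof -
  have "lap 0 w n (pot u) i = lap 0 w n (\<lambda>x. \<Sum>m\<in>{1..<n}. (coef u m / lam m) * \<phi> m x) i"
    using i by (intro lap_cong) (auto simp: pot_def)
  also have "\<dots> = (\<Sum>m\<in>{1..<n}. (coef u m / lam m) * (lam m * \<phi> m i))"
    using i by (subst lap_lin) (auto simp: eig')
  also have "\<dots> = (\<Sum>m\<in>{1..<n}. coef u m * \<phi> m i)"
  proof (intro sum.cong refl)
    fix m assume "m \<in> {1..<n}"
    then have "lam m > 0" using lampos by blast
    then show "coef u m / lam m * (lam m * \<phi> m i) = coef u m * \<phi> m i" by simp
  qed
  also have "\<dots> = u i - coef u 0 * \<phi> 0 i"
    using expand[OF i, of u] split0[of "\<lambda>m. coef u m * \<phi> m i"] n2 by simp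
  also have "coef u 0 * \<phi> 0 i = avg 0 w n u i"
  proof -
    have "coef u 0 * \<phi> 0 i = (real n powr (-1/2) * real n powr (-1/2)) * (\<Sum>j\<in>V. u j)"
      using i by (simp add: coef_def phi0' sum_distrib_left[symmetric])
    then show ?thesis using i npow by (simp add: avgE)
  qed
  finally show ?thesis .
qed

lemma pot_mass: "mass 0 w n (pot u) = 0"
proof -
  have "mass 0 w n (pot u) = (\<Sum>i\<in>V. \<Sum>m\<in>{1..<n}. (coef u m / lam m) * \<phi> m i)"
    by (simp add: massE pot_def)
  also have "\<dots> = (\<Sum>m\<in>{1..<n}. (coef u m / lam m) * (\<Sum>i\<in>V. \<phi> m i))"
    by (simp add: sum.swap[of _ V] sum_distrib_left)
  also have "\<dots> = 0" by (simp add: sum_phi)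
  finally show ?thesis .
qed

lemma zero_lap_mass: assumes z: "\<forall>i\<in>V. lap 0 w n d i = 0" and m: "(\<Sum>i\<in>V. d i) = 0"
  and i: "i \<in> V" shows "d i = 0"
proof -
  have "(\<Sum>i\<in>V. d i) = real n * (coef d 0 * real n powr (-1/2))"
    using lap_zero_const[OF z] by simp
  then have "coef d 0 * real n powr (-1/2) = 0" using m n2 by simp
  then show ?thesis using lap_zero_const[OF z i] by simp
qed

lemma potential_eq: "potential 0 w n u = pot u"
  unfolding potential_def
proof (rule the_equality)
  show "(\<forall>i\<in>V. lap 0 w n (pot u) i = u i - avg 0 w n u i) \<and> mass 0 w n (pot u) = 0 \<and>
        (\<forall>i. i \<notin> V \<longrightarrow> pot u i = 0)"
    by (simp add: pot_lap pot_mass pot_def)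
next
  fix p assume p: "(\<forall>i\<in>V. lap 0 w n p i = u i - avg 0 w n u i) \<and> mass 0 w n p = 0 \<and>
        (\<forall>i. i \<notin> V \<longrightarrow> p i = 0)"
  have "p i - pot u i = 0" if i: "i \<in> V" for i
    by (rule zero_lap_mass[where d = "\<lambda>x. p x - pot u x"])
      (use p i in \<open>auto simp: lap_diff pot_lap sum_subtractf pot_mass[unfolded massE] massE\<close>)
  then show "p = pot u" using p by (auto simp: pot_def fun_eq_iff)
qed

definition ej :: "nat \<Rightarrow> nat \<Rightarrow> real" where "ej j x = (if x = j then 1 else 0)"
definition nu :: "nat \<Rightarrow> nat \<Rightarrow> real" where
  "nu j x = (if x \<in> V then real n * (pot (ej j) j - pot (ej j) x) else 0)"

lemma sum_ej: "j \<in> V \<Longrightarrow> (\<Sum>x\<in>V. ej j x) = 1"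
  by (simp add: ej_def)

lemma pot_sum: "(\<Sum>x\<in>V. pot u x) = 0"
  using pot_mass by (simp add: massE)

lemma nu_lap: assumes j: "j \<in> V" and i: "i \<in> V" and ij: "i \<noteq> j"
  shows "lap 0 w n (nu j) i = 1"
proof -
  have "lap 0 w n (nu j) i = - real n * lap 0 w n (pot (ej j)) i"
    using i by (simp add: lapE nu_def sum_distrib_left algebra_simps cong: sum.cong)
  also have "\<dots> = 1" using i j ij n2 by (simp add: pot_lap avgE sum_ej) (simp add: ej_def)
  finally show ?thesis .
qed

lemma eqmeas_eq: assumes j: "j \<in> V" shows "eqmeas 0 w n (V - {j}) = nu j"
  unfolding eqmeas_def
proof (rule the_equality)
  show "(\<forall>i\<in>V - {j}. lap 0 w n (nu j) i = 1) \<and> (\<forall>i\<in>V - (V - {j}). nu j i = 0) \<and>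
        (\<forall>i. i \<notin> V \<longrightarrow> nu j i = 0)"
    using j by (auto simp: nu_lap nu_def)
next
  fix v assume v: "(\<forall>i\<in>V - {j}. lap 0 w n v i = 1) \<and> (\<forall>i\<in>V - (V - {j}). v i = 0) \<and>
        (\<forall>i. i \<notin> V \<longrightarrow> v i = 0)"
  define d where "d = (\<lambda>x. v x - nu j x)"
  have z1: "\<forall>i\<in>V - {j}. lap 0 w n d i = 0"
    using v by (auto simp: d_def lap_diff nu_lap j)
  have "(\<Sum>i\<in>V. lap 0 w n d i) = lap 0 w n d j + (\<Sum>i\<in>V - {j}. lap 0 w n d i)"
    using j by (simp add: sum.remove)
  then have "lap 0 w n d j = 0" using z1 lap_sum_zero[of d] by simp
  then have z: "\<forall>i\<in>V. lap 0 w n d i = 0" using z1 by auto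
  have dj: "d j = 0" using v j by (simp add: d_def nu_def)
  have "d i = 0" if i: "i \<in> V" for i
    using lap_zero_const[OF z i] lap_zero_const[OF z j] dj by simp
  then show "v = nu j" using v by (auto simp: d_def fun_eq_iff nu_def)
qed

lemma fj_eq: assumes j: "j \<in> V" and i: "i \<in> V"
  shows "fj 0 w n j i = - real n * pot (ej j) i"
proof -
  have s: "(\<Sum>x\<in>V. nu j x) = real n * real n * pot (ej j) j"
  proof -
    have "(\<Sum>x\<in>V. nu j x) = (\<Sum>x\<in>V. real n * pot (ej j) j - real n * pot (ej j) x)"
      by (intro sum.cong) (auto simp: nu_def algebra_simps)
    also have "\<dots> = real n * real n * pot (ej j) j - real n * (\<Sum>x\<in>V. pot (ej j) x)"
      by (simp add: sum_subtractf sum_distrib_left)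
    finally show ?thesis by (simp add: pot_sum)
  qed
  show ?thesis using i j n2 by (simp add: fj_def eqmeas_eq avgE s) (simp add: nu_def algebra_simps)
qed

definition M :: "real \<Rightarrow> nat \<Rightarrow> nat \<Rightarrow> real" where
  "M \<gamma> i j = (\<Sum>m\<in>{1..<n}. (lam m + \<gamma> / lam m) * \<phi> m i * \<phi> m j)"

lemma Lop_eq: assumes i: "i \<in> V"
  shows "Lop 0 w n \<gamma> u i = (\<Sum>j\<in>V. M \<gamma> i j * u j)"
proof -
  have "lap 0 w n u i = (\<Sum>m\<in>{1..<n}. coef u m * lam m * \<phi> m i)"
    using lap_expand[OF i, of u] split0[of "\<lambda>m. coef u m * lam m * \<phi> m i"] n2 lam0 by simp
  moreover have "potential 0 w n u i = (\<Sum>m\<in>{1..<n}. (coef u m / lam m) * \<phi> m i)"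
    using i by (simp add: potential_eq pot_def)
  ultimately have "Lop 0 w n \<gamma> u i = (\<Sum>m\<in>{1..<n}. coef u m * (lam m + \<gamma> / lam m) * \<phi> m i)"
    by (simp add: Lop_def sum_distrib_left sum.distrib[symmetric] algebra_simps)
  also have "\<dots> = (\<Sum>j\<in>V. M \<gamma> i j * u j)"
    by (simp add: coef_def M_def sum_distrib_left sum_distrib_right sum.swap[of _ V] algebra_simps)
  finally show ?thesis .
qed

lemma Msum: "(\<Sum>j\<in>V. M \<gamma> i j) = 0"
proof -
  have "(\<Sum>j\<in>V. M \<gamma> i j) = (\<Sum>m\<in>{1..<n}. ((lam m + \<gamma> / lam m) * \<phi> m i) * (\<Sum>j\<in>V. \<phi> m j))"
    by (simp add: M_def sum_distrib_left sum.swap[of _ V])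
  also have "\<dots> = 0" by (simp add: sum_phi)
  finally show ?thesis .
qed

lemma Msym: "M \<gamma> i j = M \<gamma> j i"
  by (simp add: M_def algebra_simps)

lemma M_off: assumes i: "i \<in> V" and j: "j \<in> V" and ij: "i \<noteq> j"
  shows "M \<gamma> i j = - w i j - \<gamma> * fj 0 w n j i / real n"
proof -
  have "(\<Sum>k\<in>V. M \<gamma> i k * ej j k) = M \<gamma> i j" using j by (simp add: ej_def if_distrib cong: if_cong)
  then have "M \<gamma> i j = Lop 0 w n \<gamma> (ej j) i" using Lop_eq[OF i] by simp
  also have "\<dots> = lap 0 w n (ej j) i + \<gamma> * pot (ej j) i" by (simp add: Lop_def potential_eq)
  also have "lap 0 w n (ej j) i = - w i j" using i j ij by (simp add: lapE ej_def if_distrib sum_negf cong: if_cong)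
  also have "pot (ej j) i = - fj 0 w n j i / real n" using fj_eq[OF j i] n2 by simp
  finally show ?thesis by simp
qed

end


theorem theorem6p15:
  fixes r \<gamma> :: real and w :: "nat \<Rightarrow> nat \<Rightarrow> real" and n :: nat
    and lam :: "nat \<Rightarrow> real" and \<phi> :: "nat \<Rightarrow> nat \<Rightarrow> real"
  assumes r0: "r = 0"
    and gam: "\<gamma> \<ge> 0"
    and G: "classC r \<gamma> w n"
    and lam0: "lam 0 = 0"
    and lampos: "\<forall>m\<in>{1..<n}. lam m > 0"
    and lamsorted: "\<forall>m k. m \<le> k \<and> k < n \<longrightarrow> lam m \<le> lam k"
    and eig: "\<forall>m<n. \<forall>i\<in>verts n. lap r w n (\<phi> m) i = lam m * \<phi> m i"
    and orth: "\<forall>m<n. \<forall>k<n. ip r w n (\<phi> m) (\<phi> k) = (if m = k then 1 else 0)"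
    and phi0: "\<forall>i\<in>verts n. \<phi> 0 i = vol r w n powr (-1/2)"
  shows "let \<Lambda> = (\<lambda>m. lam m + \<gamma> / lam m);
             wt = (\<lambda>i j. if i \<in> verts n \<and> j \<in> verts n \<and> i \<noteq> j
                     then - (deg w n j powr r) * (\<Sum>m\<in>{1..<n}. \<Lambda> m * \<phi> m i * \<phi> m j)
                     else 0)
         in is_wgraph wt n \<and>
            (\<forall>u. \<forall>i\<in>verts n.
               (\<Sum>j\<in>verts n. wt i j * (u i - u j)) = Lop r w n \<gamma> u i)"
proof -
  have wg: "is_wgraph w n" using G by (auto simp: classC_def classC0_def split: if_splits)
  interpret sp w n lam \<phi>
    using wg lam0 lampos eig orth phi0 r0 by unfold_locales auto
  define wt where "wt = (\<lambda>i j. if i \<in> V \<and> j \<in> V \<and> i \<noteq> j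
                     then - (deg w n j powr r) * (\<Sum>m\<in>{1..<n}. (lam m + \<gamma> / lam m) * \<phi> m i * \<phi> m j)
                     else 0)"
  have wt_eq: "wt i j = (if i \<in> V \<and> j \<in> V \<and> i \<noteq> j then - M \<gamma> i j else 0)" for i j
    by (simp add: wt_def r0 M_def)
  have off: "wt i j = w i j + \<gamma> * fj 0 w n j i / real n"
    if "i \<in> V" "j \<in> V" "i \<noteq> j" for i j
    using that by (simp add: wt_eq M_off)
  have key: "wt i j \<ge> 0 \<and> (w i j > 0 \<longrightarrow> wt i j > 0)"
    if ij: "i \<in> V" "j \<in> V" "i \<noteq> j" for i j
  proof (cases "\<gamma> = 0")
    case True then show ?thesis using off[OF ij] wnn[of i j] by simp
  next
    case False
    then have g: "\<gamma> > 0" using gam by simp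
    have C0: "\<forall>j\<in>V. \<forall>i\<in>V - {j}. w i j > 0 \<or> fj 0 w n j i \<ge> 0"
      and C: "\<forall>j\<in>V. \<forall>i\<in>V - {j}. w i j = 0 \<or>
           deg w n i powr (-0) * w i j + \<gamma> * (deg w n j powr 0 / vol 0 w n) * fj 0 w n j i > 0"
      using G False r0 by (auto simp: classC_def classC0_def)
    have pos: "w i j > 0 \<Longrightarrow> wt i j > 0"
    proof -
      assume wp: "w i j > 0"
      have c: "w i j = 0 \<or> deg w n i powr (-0) * w i j + \<gamma> * (deg w n j powr 0 / vol 0 w n) * fj 0 w n j i > 0"
        using C ij by blast
      then have "w i j + \<gamma> * (1 / real n) * fj 0 w n j i > 0"
        using wp ij by (simp add: volE)
      then show ?thesis using off[OF ij] by simp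
    qed
    have "wt i j \<ge> 0"
    proof (cases "w i j > 0")
      case True then show ?thesis using pos by simp
    next
      case False
      then have "fj 0 w n j i \<ge> 0" using C0 ij by auto
      then show ?thesis using off[OF ij] g wnn[of i j] by simp
    qed
    then show ?thesis using pos by simp
  qed
  have graph: "is_wgraph wt n"
    unfolding is_wgraph_def
  proof (intro conjI allI ballI)
    show "2 \<le> n" by (rule n2)
    fix i j show "wt i j = wt j i" by (simp add: wt_eq Msym)
  next
    fix i j show "0 \<le> wt i j" using key[of i j] by (auto simp: wt_eq)
  next
    fix i show "wt i i = 0" by (simp add: wt_eq)
  next
    fix i j show "i \<notin> V \<or> j \<notin> V \<longrightarrow> wt i j = 0" by (simp add: wt_eq)
  next
    fix i j assume i: "i \<in> V" and j: "j \<in> V"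
    have "(i, j) \<in> {(a, b). a \<in> V \<and> b \<in> V \<and> w a b > 0}\<^sup>*"
      using wg i j by (auto simp: is_wgraph_def)
    moreover have "{(a, b). a \<in> V \<and> b \<in> V \<and> w a b > 0} \<subseteq> {(a, b). a \<in> V \<and> b \<in> V \<and> wt a b > 0}"
      using key by (auto, metis less_irrefl wdiag)
    ultimately show "(i, j) \<in> {(a, b). a \<in> V \<and> b \<in> V \<and> wt a b > 0}\<^sup>*"
      using rtrancl_mono by blast
  qed
  have lapl: "(\<Sum>j\<in>V. wt i j * (u i - u j)) = Lop r w n \<gamma> u i" if i: "i \<in> V" for u i
  proof -
    have "(\<Sum>j\<in>V. wt i j * (u i - u j)) = (\<Sum>j\<in>V. M \<gamma> i j * u j - u i * M \<gamma> i j)"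
      using i by (intro sum.cong) (auto simp: wt_eq algebra_simps)
    also have "\<dots> = (\<Sum>j\<in>V. M \<gamma> i j * u j)"
      by (simp add: sum_subtractf sum_distrib_left[symmetric] Msum)
    also have "\<dots> = Lop r w n \<gamma> u i" using Lop_eq[OF i] r0 by simp
    finally show ?thesis .
  qed
  show ?thesis unfolding Let_def using graph lapl by (simp add: wt_def)
qed

end
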